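(* Let $\varphi\in L^\infty(\mathbb{T})$, let $C$ be a conjugation on $H^2(\mathbb{D})$, and let $S=CM_zC$. If $T_\varphi$ is $C$-symmetric, then $T_\varphi$ is $S$-Toeplitz, i.e. $S^*T_\varphi S=T_\varphi$.
   Context: A conjugation is an anti-linear, involutive ($C^2=I$), isometric map; $T$ is $C$-symmetric if $CT^*C=T$. $H^2(\mathbb{D})$ is the Hardy space of the unit disc (as a closed subspace of $L^2(\mathbb{T})$), $M_z$ is multiplication by $z$ on it, and for $\varphi\in L^\infty(\mathbb{T})$, $T_\varphi f=P_{H^2(\mathbb{D})}(\varphi f)$. *)

theory Defs
  imports "HOL-Analysis.Analysis"
begin

text \<open>H^2(D) is identified (unitarily, via Taylor/Fourier coefficients) with
  square-summable sequences indexed by nat: f = sum a_n z^n.\<close>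

definition H2 :: "(nat \<Rightarrow> complex) set" where
  "H2 = {a. summable (\<lambda>n. (cmod (a n))^2)}"

definition h2_inner :: "(nat \<Rightarrow> complex) \<Rightarrow> (nat \<Rightarrow> complex) \<Rightarrow> complex" where
  "h2_inner a b = (\<Sum>n. a n * cnj (b n))"

definition h2_norm2 :: "(nat \<Rightarrow> complex) \<Rightarrow> real" where
  "h2_norm2 a = (\<Sum>n. (cmod (a n))^2)"

text \<open>Multiplication by z: shift of coefficients.\<close>
definition Mz :: "(nat \<Rightarrow> complex) \<Rightarrow> (nat \<Rightarrow> complex)" where
  "Mz a = (\<lambda>n. if n = 0 then 0 else a (n - 1))"

text \<open>Functions on the circle T are parametrised by t in [0, 2 pi] via e^{it}.\<close>
definition Linf_circle :: "(real \<Rightarrow> complex) \<Rightarrow> bool" where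
  "Linf_circle \<phi> \<longleftrightarrow> \<phi> \<in> borel_measurable lborel \<and>
     (\<exists>B. AE t in lborel. t \<in> {0..2*pi} \<longrightarrow> cmod (\<phi> t) \<le> B)"

definition fourier_coeff :: "(real \<Rightarrow> complex) \<Rightarrow> int \<Rightarrow> complex" where
  "fourier_coeff \<phi> k = complex_of_real (1 / (2*pi)) *
     (LINT t:{0..2*pi}|lborel. \<phi> t * exp (- \<i> * of_int k * complex_of_real t))"

text \<open>Toeplitz operator T_phi f = P_{H^2}(phi f), in coefficients:
  the n-th Fourier coefficient of phi f, for n \<ge> 0.\<close>
definition toeplitz :: "(real \<Rightarrow> complex) \<Rightarrow> (nat \<Rightarrow> complex) \<Rightarrow> (nat \<Rightarrow> complex)" where
  "toeplitz \<phi> a = (\<lambda>n. \<Sum>m. fourier_coeff \<phi> (int n - int m) * a m)"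

definition conjugation :: "((nat \<Rightarrow> complex) \<Rightarrow> (nat \<Rightarrow> complex)) \<Rightarrow> bool" where
  "conjugation C \<longleftrightarrow>
     (\<forall>a\<in>H2. C a \<in> H2) \<and>
     (\<forall>a\<in>H2. \<forall>b\<in>H2. C (\<lambda>n. a n + b n) = (\<lambda>n. C a n + C b n)) \<and>
     (\<forall>c. \<forall>a\<in>H2. C (\<lambda>n. c * a n) = (\<lambda>n. cnj c * C a n)) \<and>
     (\<forall>a\<in>H2. C (C a) = a) \<and>
     (\<forall>a\<in>H2. h2_norm2 (C a) = h2_norm2 a)"

definition is_adjoint :: "((nat \<Rightarrow> complex) \<Rightarrow> (nat \<Rightarrow> complex)) \<Rightarrow>
    ((nat \<Rightarrow> complex) \<Rightarrow> (nat \<Rightarrow> complex)) \<Rightarrow> bool" where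
  "is_adjoint A T \<longleftrightarrow> (\<forall>a\<in>H2. A a \<in> H2) \<and>
     (\<forall>a\<in>H2. \<forall>b\<in>H2. h2_inner (T a) b = h2_inner a (A b))"

definition C_symmetric where
  "C_symmetric C T \<longleftrightarrow> (\<exists>Tadj. is_adjoint Tadj T \<and> (\<forall>a\<in>H2. C (Tadj (C a)) = T a))"

definition S_Toeplitz where
  "S_Toeplitz S T \<longleftrightarrow> (\<exists>Sadj. is_adjoint Sadj S \<and> (\<forall>a\<in>H2. Sadj (T (S a)) = T a))"

end

theory Submission
  imports Defs
begin

definition Lsh :: "(nat \<Rightarrow> complex) \<Rightarrow> (nat \<Rightarrow> complex)" where
  "Lsh a = (\<lambda>n. a (Suc n))"

definition ev :: "nat \<Rightarrow> nat \<Rightarrow> complex" where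
  "ev k = (\<lambda>n. if n = k then 1 else 0)"

lemma suminf_shift0:
  fixes f :: "nat \<Rightarrow> complex"
  assumes "f 0 = 0"
  shows "suminf f = suminf (\<lambda>n. f (Suc n))"
proof -
  have "\<And>s. f sums s \<longleftrightarrow> (\<lambda>n. f (Suc n)) sums s"
    using sums_Suc_iff[of f] assms by simp
  then have "(sums) f = (sums) (\<lambda>n. f (Suc n))" by (intro ext) simp
  then show ?thesis unfolding suminf_def by simp
qed

lemma inner_Mz_right: "h2_inner x (Mz u) = h2_inner (Lsh x) u"
  unfolding h2_inner_def Lsh_def
  by (subst suminf_shift0) (simp_all add: Mz_def)

lemma toeplitz_shift: "Lsh (toeplitz \<phi> (Mz v)) = toeplitz \<phi> v"
  unfolding Lsh_def toeplitz_def
  apply (rule ext)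
  apply (subst suminf_shift0)
   apply (simp_all add: Mz_def)
  done

lemma Lsh_H2: "a \<in> H2 \<Longrightarrow> Lsh a \<in> H2"
  unfolding H2_def Lsh_def using summable_Suc_iff[of "\<lambda>n. (cmod (a n))^2"] by simp

lemma Mz_H2: "a \<in> H2 \<Longrightarrow> Mz a \<in> H2"
proof -
  assume "a \<in> H2"
  then have "summable (\<lambda>n. (cmod (Mz a (Suc n)))^2)" unfolding H2_def Mz_def by simp
  then show ?thesis unfolding H2_def using summable_Suc_iff by blast
qed

lemma ev_H2: "ev k \<in> H2"
proof -
  have "(\<lambda>n. (cmod (ev k n))^2) = (\<lambda>n. if n = k then 1 else 0)"
    by (auto simp: ev_def)
  then show ?thesis unfolding H2_def using sums_single[of k "\<lambda>_. 1::real"]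
    by (auto simp: sums_iff)
qed

lemma inner_ev: "h2_inner x (ev k) = x k"
proof -
  have "(\<lambda>n. x n * cnj (ev k n)) = (\<lambda>n. if n = k then x n else 0)"
    by (auto simp: ev_def)
  then show ?thesis unfolding h2_inner_def using sums_single[of k x]
    by (simp add: sums_iff)
qed

lemma prod_summable:
  assumes "a \<in> H2" "b \<in> H2"
  shows "summable (\<lambda>n. a n * cnj (b n))"
proof (rule summable_comparison_test)
  show "summable (\<lambda>n. (cmod (a n))^2 + (cmod (b n))^2)"
    using assms unfolding H2_def by (intro summable_add) auto
  show "\<exists>N. \<forall>n\<ge>N. norm (a n * cnj (b n)) \<le> (cmod (a n))^2 + (cmod (b n))^2"
  proof (intro exI allI impI)
    fix n
    have "cmod (a n) * cmod (b n) \<le> (cmod (a n))^2 + (cmod (b n))^2"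
    proof -
      have "0 \<le> (cmod (a n) - cmod (b n))^2" by simp
      moreover have "0 \<le> cmod (a n) * cmod (b n)" by simp
      ultimately show ?thesis unfolding power2_diff by linarith
    qed
    then show "norm (a n * cnj (b n)) \<le> (cmod (a n))^2 + (cmod (b n))^2"
      by (simp add: norm_mult)
  qed
qed

lemma inner_cnj:
  assumes "a \<in> H2" "b \<in> H2"
  shows "h2_inner a b = cnj (h2_inner b a)"
proof -
  have s: "summable (\<lambda>n. b n * cnj (a n))" using prod_summable assms by blast
  have "(\<lambda>n. cnj (b n * cnj (a n))) sums cnj (h2_inner b a)"
    using s sums_cnj unfolding h2_inner_def summable_sums_iff by (metis summable_sums)
  then show ?thesis unfolding h2_inner_def by (simp add: sums_iff mult.commute)
qed

lemma add_H2: "a \<in> H2 \<Longrightarrow> b \<in> H2 \<Longrightarrow> (\<lambda>n. a n + b n) \<in> H2"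
proof -
  assume a: "a \<in> H2" and b: "b \<in> H2"
  show ?thesis unfolding H2_def mem_Collect_eq
  proof (rule summable_comparison_test)
    show "summable (\<lambda>n. 2 * (cmod (a n))^2 + 2 * (cmod (b n))^2)"
      using a b unfolding H2_def by (intro summable_add summable_mult) auto
    show "\<exists>N. \<forall>n\<ge>N. norm ((cmod (a n + b n))^2) \<le> 2 * (cmod (a n))^2 + 2 * (cmod (b n))^2"
    proof (intro exI allI impI)
      fix n
      have t: "cmod (a n + b n) \<le> cmod (a n) + cmod (b n)" by (rule norm_triangle_ineq)
      have "(cmod (a n + b n))^2 \<le> (cmod (a n) + cmod (b n))^2"
        using t by (simp add: power_mono)
      also have "\<dots> \<le> 2 * (cmod (a n))^2 + 2 * (cmod (b n))^2"
      proof -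
        have "0 \<le> (cmod (a n) - cmod (b n))^2" by simp
        then show ?thesis unfolding power2_diff power2_sum by linarith
      qed
      finally show "norm ((cmod (a n + b n))^2) \<le> 2 * (cmod (a n))^2 + 2 * (cmod (b n))^2"
        by simp
    qed
  qed
qed

lemma smult_H2: "a \<in> H2 \<Longrightarrow> (\<lambda>n. c * a n) \<in> H2"
  unfolding H2_def by (simp add: norm_mult power_mult_distrib summable_mult)

lemma cmod_add_sq: "(cmod (x + y))^2 = (cmod x)^2 + (cmod y)^2 + 2 * Re (x * cnj y)"
  unfolding cmod_power2 by (simp add: power2_sum algebra_simps)

lemma norm2_add:
  assumes "a \<in> H2" "b \<in> H2"
  shows "h2_norm2 (\<lambda>n. a n + b n) = h2_norm2 a + h2_norm2 b + 2 * Re (h2_inner a b)"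
proof -
  have sa: "summable (\<lambda>n. (cmod (a n))^2)" and sb: "summable (\<lambda>n. (cmod (b n))^2)"
    using assms unfolding H2_def by auto
  have sp: "summable (\<lambda>n. a n * cnj (b n))" using prod_summable assms by blast
  have sr: "summable (\<lambda>n. 2 * Re (a n * cnj (b n)))"
    by (rule summable_mult[OF summable_Re[OF sp]])
  have "h2_norm2 (\<lambda>n. a n + b n) =
      (\<Sum>n. (cmod (a n))^2 + (cmod (b n))^2 + 2 * Re (a n * cnj (b n)))"
    unfolding h2_norm2_def by (simp add: cmod_add_sq)
  also have "\<dots> = (\<Sum>n. (cmod (a n))^2 + (cmod (b n))^2) + (\<Sum>n. 2 * Re (a n * cnj (b n)))"
    by (rule suminf_add[symmetric, OF summable_add[OF sa sb] sr])
  also have "\<dots> = h2_norm2 a + h2_norm2 b + 2 * (\<Sum>n. Re (a n * cnj (b n)))"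
    unfolding h2_norm2_def
    by (simp only: suminf_add[OF sa sb, symmetric] suminf_mult[OF summable_Re[OF sp]])
  also have "(\<Sum>n. Re (a n * cnj (b n))) = Re (h2_inner a b)"
    unfolding h2_inner_def using Re_suminf[OF sp] by simp
  finally show ?thesis .
qed

lemma inner_smult_right:
  assumes "a \<in> H2" "b \<in> H2"
  shows "h2_inner a (\<lambda>n. c * b n) = cnj c * h2_inner a b"
proof -
  have sp: "summable (\<lambda>n. a n * cnj (b n))" using prod_summable assms by blast
  have "h2_inner a (\<lambda>n. c * b n) = (\<Sum>n. cnj c * (a n * cnj (b n)))"
    unfolding h2_inner_def by (simp add: algebra_simps)
  also have "\<dots> = cnj c * h2_inner a b"
    unfolding h2_inner_def by (rule suminf_mult[OF sp])
  finally show ?thesis .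
qed

lemma conj_inner:
  assumes C: "conjugation C" and a: "a \<in> H2" and b: "b \<in> H2"
  shows "h2_inner (C a) (C b) = h2_inner b a"
proof -
  have CH: "\<And>x. x \<in> H2 \<Longrightarrow> C x \<in> H2"
    and Cadd: "\<And>x y. x \<in> H2 \<Longrightarrow> y \<in> H2 \<Longrightarrow> C (\<lambda>n. x n + y n) = (\<lambda>n. C x n + C y n)"
    and Cmul: "\<And>c x. x \<in> H2 \<Longrightarrow> C (\<lambda>n. c * x n) = (\<lambda>n. cnj c * C x n)"
    and Cn: "\<And>x. x \<in> H2 \<Longrightarrow> h2_norm2 (C x) = h2_norm2 x"
    using C unfolding conjugation_def by auto
  have Ca: "C a \<in> H2" and Cb: "C b \<in> H2" using CH a b by auto
  have e1: "Re (h2_inner (C a) (C b)) = Re (h2_inner a b)"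
  proof -
    have "h2_norm2 (C (\<lambda>n. a n + b n)) = h2_norm2 (\<lambda>n. a n + b n)"
      using Cn add_H2[OF a b] by blast
    then have "h2_norm2 (\<lambda>n. C a n + C b n) = h2_norm2 (\<lambda>n. a n + b n)"
      using Cadd[OF a b] by simp
    then show ?thesis using norm2_add[OF a b] norm2_add[OF Ca Cb] Cn[OF a] Cn[OF b] by simp
  qed
  define ib where "ib = (\<lambda>n. \<i> * b n)"
  have ibH: "ib \<in> H2" unfolding ib_def using smult_H2[OF b] .
  have Cib: "C ib = (\<lambda>n. - \<i> * C b n)" unfolding ib_def using Cmul[OF b] by simp
  have e2: "Re (h2_inner (C a) (C ib)) = Re (h2_inner a ib)"
  proof -
    have "h2_norm2 (C (\<lambda>n. a n + ib n)) = h2_norm2 (\<lambda>n. a n + ib n)"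
      using Cn add_H2[OF a ibH] by blast
    then have "h2_norm2 (\<lambda>n. C a n + C ib n) = h2_norm2 (\<lambda>n. a n + ib n)"
      using Cadd[OF a ibH] by simp
    then show ?thesis using norm2_add[OF a ibH] norm2_add[OF Ca CH[OF ibH]] Cn[OF a] Cn[OF ibH]
      by simp
  qed
  have "h2_inner (C a) (C ib) = \<i> * h2_inner (C a) (C b)"
    using inner_smult_right[OF Ca Cb, of "- \<i>"] Cib by simp
  moreover have "h2_inner a ib = - \<i> * h2_inner a b"
    using inner_smult_right[OF a b, of "\<i>"] unfolding ib_def by simp
  ultimately have e3: "Im (h2_inner (C a) (C b)) = - Im (h2_inner a b)"
    using e2 by simp
  have "h2_inner (C a) (C b) = cnj (h2_inner a b)"
    using e1 e3 by (simp add: complex_eq_iff)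
  then show ?thesis using inner_cnj[OF b a] by simp
qed

lemma toeplitz_adj_shift:
  assumes adj: "is_adjoint Tadj (toeplitz \<phi>)" and u: "u \<in> H2"
  shows "Lsh (Tadj (Mz u)) = Tadj u"
proof
  fix k
  let ?T = "toeplitz \<phi>"
  have AH: "\<And>x. x \<in> H2 \<Longrightarrow> Tadj x \<in> H2"
    and AI: "\<And>x y. x \<in> H2 \<Longrightarrow> y \<in> H2 \<Longrightarrow> h2_inner (?T x) y = h2_inner x (Tadj y)"
    using adj unfolding is_adjoint_def by auto
  have Mu: "Mz u \<in> H2" using Mz_H2[OF u] .
  have Me: "Mz (ev k) \<in> H2" using Mz_H2[OF ev_H2] .
  have "Lsh (Tadj (Mz u)) k = h2_inner (Lsh (Tadj (Mz u))) (ev k)" by (simp add: inner_ev)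
  also have "\<dots> = h2_inner (Tadj (Mz u)) (Mz (ev k))" by (simp add: inner_Mz_right)
  also have "\<dots> = cnj (h2_inner (Mz (ev k)) (Tadj (Mz u)))"
    using inner_cnj[OF AH[OF Mu] Me] .
  also have "\<dots> = cnj (h2_inner (?T (Mz (ev k))) (Mz u))" using AI[OF Me Mu] by simp
  also have "\<dots> = cnj (h2_inner (Lsh (?T (Mz (ev k)))) u)" by (simp add: inner_Mz_right)
  also have "\<dots> = cnj (h2_inner (?T (ev k)) u)" by (simp add: toeplitz_shift)
  also have "\<dots> = cnj (h2_inner (ev k) (Tadj u))" using AI[OF ev_H2 u] by simp
  also have "\<dots> = h2_inner (Tadj u) (ev k)" using inner_cnj[OF AH[OF u] ev_H2] by simp
  also have "\<dots> = Tadj u k" by (simp add: inner_ev)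
  finally show "Lsh (Tadj (Mz u)) k = Tadj u k" .
qed

theorem proposition4p5:
  fixes \<phi> :: "real \<Rightarrow> complex" and C :: "(nat \<Rightarrow> complex) \<Rightarrow> (nat \<Rightarrow> complex)"
  assumes "Linf_circle \<phi>" and "conjugation C" and "C_symmetric C (toeplitz \<phi>)"
  shows "S_Toeplitz (\<lambda>a. C (Mz (C a))) (toeplitz \<phi>)"
proof -
  let ?T = "toeplitz \<phi>"
  have C: "conjugation C" by fact
  have CH: "\<And>x. x \<in> H2 \<Longrightarrow> C x \<in> H2" and CC: "\<And>x. x \<in> H2 \<Longrightarrow> C (C x) = x"
    using C unfolding conjugation_def by auto
  obtain Tadj where adj: "is_adjoint Tadj ?T" and sym: "\<And>a. a \<in> H2 \<Longrightarrow> C (Tadj (C a)) = ?T a"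
    using assms(3) unfolding C_symmetric_def by blast
  have AH: "\<And>x. x \<in> H2 \<Longrightarrow> Tadj x \<in> H2" using adj unfolding is_adjoint_def by auto
  define Sadj where "Sadj = (\<lambda>a. C (Lsh (C a)))"
  have "is_adjoint Sadj (\<lambda>a. C (Mz (C a)))"
    unfolding is_adjoint_def
  proof (intro conjI ballI)
    fix a assume a: "a \<in> H2"
    show "Sadj a \<in> H2" unfolding Sadj_def using CH Lsh_H2 a by blast
  next
    fix a b assume a: "a \<in> H2" and b: "b \<in> H2"
    have Ca: "C a \<in> H2" and Cb: "C b \<in> H2" using CH a b by auto
    have "h2_inner (C (Mz (C a))) b = h2_inner (C (Mz (C a))) (C (C b))" using CC[OF b] by simp
    also have "\<dots> = h2_inner (C b) (Mz (C a))" using conj_inner[OF C Mz_H2[OF Ca] Cb] .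
    also have "\<dots> = h2_inner (Lsh (C b)) (C a)" by (simp add: inner_Mz_right)
    also have "\<dots> = h2_inner (C (C a)) (C (Lsh (C b)))"
      using conj_inner[OF C Ca Lsh_H2[OF Cb]] by simp
    also have "\<dots> = h2_inner a (Sadj b)" unfolding Sadj_def using CC[OF a] by simp
    finally show "h2_inner (C (Mz (C a))) b = h2_inner a (Sadj b)" .
  qed
  moreover have "\<forall>a\<in>H2. Sadj (?T (C (Mz (C a)))) = ?T a"
  proof
    fix a assume a: "a \<in> H2"
    have Ca: "C a \<in> H2" using CH a by auto
    have y: "Mz (C a) \<in> H2" using Mz_H2[OF Ca] .
    have "?T (C (Mz (C a))) = C (Tadj (C (C (Mz (C a)))))" using sym[OF CH[OF y]] by simp
    also have "\<dots> = C (Tadj (Mz (C a)))" using CC[OF y] by simp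
    finally have "Sadj (?T (C (Mz (C a)))) = C (Lsh (C (C (Tadj (Mz (C a))))))"
      unfolding Sadj_def by simp
    also have "\<dots> = C (Lsh (Tadj (Mz (C a))))" using CC[OF AH[OF y]] by simp
    also have "\<dots> = C (Tadj (C a))" using toeplitz_adj_shift[OF adj Ca] by simp
    also have "\<dots> = ?T a" using sym[OF a] .
    finally show "Sadj (?T (C (Mz (C a)))) = ?T a" .
  qed
  ultimately show ?thesis unfolding S_Toeplitz_def by blast
qed

end
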